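(* Let $X$ be a Hilbert space and let $T:X\rightrightarrows X$ be semilocally monotone on $X$ (i.e., semilocally monotone at every point of $\operatorname{dom}T$), and suppose $\operatorname{dom}T$ is convex. Then $T$ is (globally) monotone on $X$.
   Context: $X$ is a real Hilbert space. For $T:X\rightrightarrows X$, $\operatorname{dom}T=\{u:T(u)\ne\emptyset\}$, $\operatorname{gph}T=\{(u,v):v\in T(u)\}$. $T$ is monotone if $\langle v_1-v_2,u_1-u_2\rangle\ge0$ for all $(u_1,v_1),(u_2,v_2)\in\operatorname{gph}T$. $T$ is semilocally monotone at $\bar u\in\operatorname{dom}T$ if there is a neighborhood $U$ of $\bar u$ in $X$ such that $\langle v_1-v_2,u_1-u_2\rangle\ge0$ for all $(u_1,v_1),(u_2,v_2)\in\operatorname{gph}T\cap(U\times X)$. *)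

theory Defs
  imports "HOL-Analysis.Analysis"
begin

definition dom_sv :: "('a \<Rightarrow> 'b set) \<Rightarrow> 'a set" where
  "dom_sv T = {u. T u \<noteq> {}}"

definition gph_sv :: "('a \<Rightarrow> 'b set) \<Rightarrow> ('a \<times> 'b) set" where
  "gph_sv T = {(u, v). v \<in> T u}"

definition monotone_sv :: "('a::real_inner \<Rightarrow> 'a set) \<Rightarrow> bool" where
  "monotone_sv T \<longleftrightarrow>
     (\<forall>(u1, v1) \<in> gph_sv T. \<forall>(u2, v2) \<in> gph_sv T. inner (v1 - v2) (u1 - u2) \<ge> 0)"

definition semilocally_monotone_at :: "('a::real_inner \<Rightarrow> 'a set) \<Rightarrow> 'a \<Rightarrow> bool" where
  "semilocally_monotone_at T ubar \<longleftrightarrow> ubar \<in> dom_sv T \<and>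
     (\<exists>U. open U \<and> ubar \<in> U \<and>
        (\<forall>(u1, v1) \<in> gph_sv T \<inter> (U \<times> UNIV). \<forall>(u2, v2) \<in> gph_sv T \<inter> (U \<times> UNIV).
            inner (v1 - v2) (u1 - u2) \<ge> 0))"

end

theory Submission
  imports Defs
begin

theorem lemma3p4:
  fixes T :: "'a::{real_inner, complete_space} \<Rightarrow> 'a set"
  assumes "\<forall>ubar \<in> dom_sv T. semilocally_monotone_at T ubar"
    and "convex (dom_sv T)"
  shows "monotone_sv T"
proof -
  define good where "good U \<longleftrightarrow> open U \<and> (\<forall>a b x y. a \<in> U \<longrightarrow> b \<in> U \<longrightarrow> x \<in> T a \<longrightarrow> y \<in> T b
        \<longrightarrow> inner (x - y) (a - b) \<ge> 0)" for U
  have loc: "\<exists>U. w \<in> U \<and> good U" if "w \<in> dom_sv T" for w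
  proof -
    from assms(1) that obtain U where U: "open U" "w \<in> U"
      "\<forall>(u1, v1) \<in> gph_sv T \<inter> (U \<times> UNIV). \<forall>(u2, v2) \<in> gph_sv T \<inter> (U \<times> UNIV).
            inner (v1 - v2) (u1 - u2) \<ge> 0"
      unfolding semilocally_monotone_at_def by blast
    have "good U" unfolding good_def
    proof (intro conjI allI impI)
      fix a b x y assume "a \<in> U" "b \<in> U" "x \<in> T a" "y \<in> T b"
      then show "inner (x - y) (a - b) \<ge> 0" using U(3) unfolding gph_sv_def by fast
    qed (use U in auto)
    with U show ?thesis by blast
  qed
  show ?thesis unfolding monotone_sv_def
  proof (clarify)
    fix u1 v1 u2 v2 assume g1: "(u1, v1) \<in> gph_sv T" and g2: "(u2, v2) \<in> gph_sv T"
    then have v1: "v1 \<in> T u1" and v2: "v2 \<in> T u2" by (auto simp: gph_sv_def)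
    then have d1: "u1 \<in> dom_sv T" and d2: "u2 \<in> dom_sv T" by (auto simp: dom_sv_def)
    define d where "d = u2 - u1"
    define g where "g t = u1 + t *\<^sub>R d" for t :: real
    have gdom: "g t \<in> dom_sv T" if "0 \<le> t" "t \<le> 1" for t
    proof -
      have "g t = (1 - t) *\<^sub>R u1 + t *\<^sub>R u2" by (simp add: g_def d_def algebra_simps)
      then show ?thesis using assms(2) d1 d2 that by (simp add: convex_def)
    qed
    define G where "G = (\<lambda>U. g -` U) ` Collect good"
    have cont: "continuous (at x) g" for x unfolding g_def by (intro continuous_intros)
    have cpt: "compact {0..1::real}" by simp
    have cov: "{0..1::real} \<subseteq> \<Union>G"
    proof
      fix t :: real assume "t \<in> {0..1}"
      then have "g t \<in> dom_sv T" using gdom by auto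
      then obtain U where "g t \<in> U" "good U" using loc by blast
      then have "g -` U \<in> G" "t \<in> g -` U" unfolding G_def by (auto intro: imageI)
      then show "t \<in> \<Union>G" by blast
    qed
    have opn: "open H" if "H \<in> G" for H
    proof -
      from that obtain U where H: "H = g -` U" and "good U" unfolding G_def by (auto elim!: imageE)
      then have "open U" unfolding good_def by simp
      from continuous_open_vimage[OF this cont] show ?thesis unfolding H .
    qed
    obtain \<epsilon> where e: "0 < \<epsilon>" "\<And>x. x \<in> {0..1} \<Longrightarrow> \<exists>H \<in> G. ball x \<epsilon> \<subseteq> H"
      using Heine_Borel_lemma[OF cpt cov opn] by blast
    obtain N :: nat where N: "N \<noteq> 0" "inverse (real N) < \<epsilon>"
      using real_arch_inverse e(1) by blast
    define x where "x k = g (real k / real N)" for k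
    have step: "inner (b - a) d \<ge> 0" if "k < N" "a \<in> T (x k)" "b \<in> T (x (Suc k))" for k a b
    proof -
      have "real k / real N \<in> {0..1}" using that N by auto
      then obtain H where "H \<in> G" "ball (real k / real N) \<epsilon> \<subseteq> H"
        using e(2) by blast
      then obtain U where U: "good U" "ball (real k / real N) \<epsilon> \<subseteq> g -` U"
        unfolding G_def by (auto elim!: imageE)
      have m1: "real k / real N \<in> ball (real k / real N) \<epsilon>" using e by simp
      have m2: "real (Suc k) / real N \<in> ball (real k / real N) \<epsilon>"
        using N by (simp add: dist_real_def add_divide_distrib divide_inverse algebra_simps)
      have "x k \<in> U" using subsetD[OF U(2) m1] unfolding x_def by simp
      moreover have "x (Suc k) \<in> U" using subsetD[OF U(2) m2] unfolding x_def by simp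
      ultimately have "x k \<in> U" "x (Suc k) \<in> U" by simp_all
      with U(1) that have "inner (b - a) (x (Suc k) - x k) \<ge> 0" unfolding good_def by blast
      moreover have "x (Suc k) - x k = inverse (real N) *\<^sub>R d"
        using N by (simp add: x_def g_def algebra_simps add_divide_distrib divide_inverse)
      ultimately have "inverse (real N) * inner (b - a) d \<ge> 0" by simp
      then show ?thesis using N by (simp add: zero_le_mult_iff)
    qed
    have xdom: "x k \<in> dom_sv T" if "k \<le> N" for k
      using gdom[of "real k / real N"] that N unfolding x_def by auto
    have x0: "x 0 = u1" by (simp add: x_def g_def)
    have xN: "x N = u2" using N by (simp add: x_def g_def d_def)
    have claim: "k < N \<longrightarrow> (\<forall>b\<in>T (x (Suc k)). inner (b - v1) d \<ge> 0)" for k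
    proof (induction k)
      case 0
      then show ?case using step[of 0 v1] v1 x0 N by auto
    next
      case (Suc k)
      show ?case
      proof (intro impI ballI)
        fix b assume k: "Suc k < N" and b: "b \<in> T (x (Suc (Suc k)))"
        obtain a where a: "a \<in> T (x (Suc k))" using xdom[of "Suc k"] k unfolding dom_sv_def by auto
        have "inner (a - v1) d \<ge> 0" using Suc k a by auto
        moreover have "inner (b - a) d \<ge> 0" using step[OF k a b] .
        moreover have "inner (b - v1) d = inner (b - a) d + inner (a - v1) d"
          by (simp add: inner_diff_left)
        ultimately show "inner (b - v1) d \<ge> 0" by linarith
      qed
    qed
    have "inner (v2 - v1) d \<ge> 0"
      using claim[of "N - 1"] N v2 xN by (simp add: Suc_pred')
    moreover have "inner (v1 - v2) (u1 - u2) = inner (v2 - v1) d"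
      unfolding d_def by (metis inner_minus_left inner_minus_right minus_diff_eq minus_minus)
    ultimately show "0 \<le> inner (v1 - v2) (u1 - u2)" by simp
  qed
qed

end
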